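(* Let $(X,d)$ be a compact metric space and $f_{0,\infty}=\{f_n\}_{n=0}^\infty$ an equi-continuous sequence of continuous surjective self-maps of $X$. For $i\ge0$ let $f_{i,\infty}=\{f_n\}_{n=i}^\infty$. Then for any $A\in\mathcal{S}$, \[h_{A}(f_{i,\infty})\geq h_{A}(f_{j,\infty}),\quad 0\leq i\leq j<\infty,\] and thus \[h^{*}(f_{i,\infty})=h^{*}(f_{j,\infty}),\quad 0\leq i\leq j<\infty.\]
   Context: $f_{0,\infty}$ is equi-continuous if for every $\epsilon>0$ there is $\delta>0$ with $d(x,y)<\delta\Rightarrow d(f_n x,f_n y)<\epsilon$ for all $n$. $f_i^n=f_{i+n-1}\circ\cdots\circ f_i$ ($n\ge1$), $f_i^0=\mathrm{id}$, $f_i^{-n}(B)=(f_i^n)^{-1}(B)$. $\mathcal S$ is the set of strictly increasing sequences $A=\{a_k\}_{k\ge1}$ of nonnegative integers. $h_A(f_{i,\infty})=\sup_{\mathscr A}\limsup_{n\to\infty}\frac1n\log\mathcal N(\bigvee_{k=1}^n f_i^{-a_k}\mathscr A)$ over finite open covers $\mathscr A$ ($\bigvee$ = common refinement, $\mathcal N$ = minimal cardinality of a subcover), and $h^*(f_{i,\infty})=\sup_{A\in\mathcal S}h_A(f_{i,\infty})$. *)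

theory Defs
  imports "HOL-Analysis.Analysis" "HOL-Library.Liminf_Limsup"
begin

text \<open>Composition of a nonautonomous sequence g (indexed from 0):
  ncomp g n = g (n-1) o ... o g 0, ncomp g 0 = id.  For f_{i,infinity} we use g = (\<lambda>n. f (n + i)),
  so ncomp g n is f_i^n.\<close>
fun ncomp :: "(nat \<Rightarrow> 'a \<Rightarrow> 'a) \<Rightarrow> nat \<Rightarrow> 'a \<Rightarrow> 'a" where
  "ncomp g 0 = id"
| "ncomp g (Suc n) = g n \<circ> ncomp g n"

definition open_covers :: "'a::metric_space set \<Rightarrow> 'a set set set" where
  "open_covers X = {\<A>. finite \<A> \<and> (\<forall>U\<in>\<A>. openin (top_of_set X) U) \<and> X \<subseteq> \<Union>\<A>}"

definition cover_preimage :: "'a set \<Rightarrow> ('a \<Rightarrow> 'a) \<Rightarrow> 'a set set \<Rightarrow> 'a set set" where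
  "cover_preimage X h \<A> = (\<lambda>B. X \<inter> h -` B) ` \<A>"

fun join_covers :: "'a set \<Rightarrow> (nat \<Rightarrow> 'a set set) \<Rightarrow> nat \<Rightarrow> 'a set set" where
  "join_covers X C 0 = {X}"
| "join_covers X C (Suc n) = {A \<inter> B | A B. A \<in> join_covers X C n \<and> B \<in> C n}"

definition Ncov :: "'a set \<Rightarrow> 'a set set \<Rightarrow> nat" where
  "Ncov X \<U> = (LEAST m. \<exists>\<V>\<subseteq>\<U>. X \<subseteq> \<Union>\<V> \<and> finite \<V> \<and> card \<V> = m)"

text \<open>Sequence entropy along a strictly increasing sequence a (a 0 plays the role of a_1).\<close>
definition seq_entropy :: "'a::metric_space set \<Rightarrow> (nat \<Rightarrow> 'a \<Rightarrow> 'a) \<Rightarrow> (nat \<Rightarrow> nat) \<Rightarrow> ereal" where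
  "seq_entropy X g a = (SUP \<A>\<in>open_covers X.
     limsup (\<lambda>n. ereal (ln (real (Ncov X (join_covers X (\<lambda>k. cover_preimage X (ncomp g (a k)) \<A>) n))) / real n)))"

definition sup_seq_entropy :: "'a::metric_space set \<Rightarrow> (nat \<Rightarrow> 'a \<Rightarrow> 'a) \<Rightarrow> ereal" where
  "sup_seq_entropy X g = (SUP a\<in>{a. strict_mono a}. seq_entropy X g a)"

end

theory Submission
  imports Defs
begin

lemma ncomp_add: "ncomp g (a + m) = ncomp (\<lambda>n. g (n + a)) m \<circ> ncomp g a"
  by (induction m) (auto simp: add.commute)

lemma ncomp_maps: "(\<And>n. g n ` X \<subseteq> X) \<Longrightarrow> x \<in> X \<Longrightarrow> ncomp g m x \<in> X"
  by (induction m) auto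

lemma join_sub: "W \<in> join_covers X C n \<Longrightarrow> W \<subseteq> X"
  by (induction n arbitrary: W) auto

lemma join_fin_cov:
  assumes "\<And>k. k < n \<Longrightarrow> finite (C k) \<and> X \<subseteq> \<Union>(C k)"
  shows "finite (join_covers X C n) \<and> X \<subseteq> \<Union>(join_covers X C n)"
  using assms
proof (induction n)
  case 0 then show ?case by auto
next
  case (Suc n)
  have IH: "finite (join_covers X C n)" "X \<subseteq> \<Union>(join_covers X C n)" using Suc by auto
  have C: "finite (C n)" "X \<subseteq> \<Union>(C n)" using Suc.prems by auto
  have eq: "join_covers X C (Suc n) = (\<lambda>(A,B). A \<inter> B) ` (join_covers X C n \<times> C n)"
    by auto
  have "X \<subseteq> \<Union>(join_covers X C (Suc n))"
  proof
    fix x assume "x \<in> X"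
    then obtain A B where "A \<in> join_covers X C n" "x \<in> A" "B \<in> C n" "x \<in> B" using IH C by blast
    then show "x \<in> \<Union>(join_covers X C (Suc n))" by auto
  qed
  then show ?case using eq IH C by auto
qed

lemma join_img:
  assumes "g ` X \<subseteq> X" "\<And>k B. k < n \<Longrightarrow> B \<in> D k \<Longrightarrow> \<exists>C'\<in>C k. g ` B \<subseteq> C'"
  shows "W \<in> join_covers X D n \<Longrightarrow> \<exists>C'\<in>join_covers X C n. g ` W \<subseteq> C'"
  using assms(2)
proof (induction n arbitrary: W)
  case 0 then show ?case using assms(1) by auto
next
  case (Suc n)
  then obtain A B where W: "W = A \<inter> B" "A \<in> join_covers X D n" "B \<in> D n" by auto
  have "\<exists>CA\<in>join_covers X C n. g ` A \<subseteq> CA" using Suc.IH[OF W(2)] Suc.prems by auto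
  then obtain CA where "CA \<in> join_covers X C n" "g ` A \<subseteq> CA" by blast
  moreover obtain CB where "CB \<in> C n" "g ` B \<subseteq> CB" using Suc.prems W by blast
  ultimately show ?case using W by (intro bexI[of _ "CA \<inter> CB"]) auto
qed

lemma join_pre:
  assumes "\<And>k B. k < n \<Longrightarrow> B \<in> D k \<Longrightarrow> \<exists>C'\<in>C k. X \<inter> g -` B \<subseteq> C'"
  shows "W \<in> join_covers X D n \<Longrightarrow> \<exists>C'\<in>join_covers X C n. X \<inter> g -` W \<subseteq> C'"
  using assms
proof (induction n arbitrary: W)
  case 0 then show ?case by auto
next
  case (Suc n)
  then obtain A B where W: "W = A \<inter> B" "A \<in> join_covers X D n" "B \<in> D n" by auto
  have "\<exists>CA\<in>join_covers X C n. X \<inter> g -` A \<subseteq> CA" using Suc.IH[OF W(2)] Suc.prems by auto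
  then obtain CA where "CA \<in> join_covers X C n" "X \<inter> g -` A \<subseteq> CA" by blast
  moreover obtain CB where "CB \<in> C n" "X \<inter> g -` B \<subseteq> CB" using Suc.prems W by blast
  ultimately show ?case using W by (intro bexI[of _ "CA \<inter> CB"]) auto
qed

lemma join_split:
  assumes "A \<in> join_covers X C m" "B \<in> join_covers X (\<lambda>k. C (k + m)) n"
  shows "A \<inter> B \<in> join_covers X C (m + n)"
  using assms(2)
proof (induction n arbitrary: B)
  case 0 then show ?case using join_sub[OF assms(1)] assms(1) by (auto simp: Int_absorb2)
next
  case (Suc n)
  then obtain B' E where B: "B = B' \<inter> E" "B' \<in> join_covers X (\<lambda>k. C (k + m)) n" "E \<in> C (n + m)" by auto
  have "A \<inter> B' \<in> join_covers X C (m + n)" using Suc B by auto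
  then have "(A \<inter> B') \<inter> E \<in> join_covers X C (Suc (m + n))" using B by (auto simp: add.commute)
  then show ?case using B by (simp add: Int_assoc)
qed

lemma Ncov_min:
  assumes "\<exists>V\<subseteq>U. X \<subseteq> \<Union>V \<and> finite V"
  obtains V where "V \<subseteq> U" "X \<subseteq> \<Union>V" "finite V" "card V = Ncov X U"
proof -
  from assms obtain V where "V \<subseteq> U" "X \<subseteq> \<Union>V" "finite V" by blast
  then have "\<exists>m. \<exists>V\<subseteq>U. X \<subseteq> \<Union>V \<and> finite V \<and> card V = m" by blast
  from LeastI_ex[OF this]
  show ?thesis using that unfolding Ncov_def by blast
qed

lemma Ncov_le: "V \<subseteq> U \<Longrightarrow> X \<subseteq> \<Union>V \<Longrightarrow> finite V \<Longrightarrow> Ncov X U \<le> card V"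
  unfolding Ncov_def by (rule Least_le) blast

lemma Ncov_pos: "X \<noteq> {} \<Longrightarrow> \<exists>V\<subseteq>U. X \<subseteq> \<Union>V \<and> finite V \<Longrightarrow> Ncov X U \<ge> 1"
proof -
  assume "X \<noteq> {}" "\<exists>V\<subseteq>U. X \<subseteq> \<Union>V \<and> finite V"
  then obtain V where "V \<subseteq> U" "X \<subseteq> \<Union>V" "finite V" "card V = Ncov X U" using Ncov_min[of U X] by blast
  then show ?thesis using \<open>X \<noteq> {}\<close> by (cases "V = {}") (auto simp: Suc_le_eq card_gt_0_iff)
qed

lemma Ncov_empty: "Ncov {} U = 0"
  unfolding Ncov_def by (rule Least_eq_0) (intro exI[of _ "{}"], auto)

lemma Ncov_img:
  assumes "X \<subseteq> g ` X" "V0 \<subseteq> D" "X \<subseteq> \<Union>V0" "finite V0"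
    and "\<And>W. W \<in> D \<Longrightarrow> \<exists>C'\<in>C. g ` (W \<inter> X) \<subseteq> C'"
  shows "Ncov X C \<le> Ncov X D"
proof -
  obtain V where V: "V \<subseteq> D" "X \<subseteq> \<Union>V" "finite V" "card V = Ncov X D"
    using Ncov_min[of D X] assms by blast
  obtain h where h: "\<And>W. W \<in> D \<Longrightarrow> h W \<in> C \<and> g ` (W \<inter> X) \<subseteq> h W"
    using assms(5) by metis
  have "X \<subseteq> \<Union>(h ` V)"
  proof
    fix x assume "x \<in> X"
    then obtain y where y: "y \<in> X" "x = g y" using assms(1) by auto
    then obtain W where "W \<in> V" "y \<in> W" using V by auto
    then show "x \<in> \<Union>(h ` V)" using h[of W] V y by auto
  qed
  then have "Ncov X C \<le> card (h ` V)" using h V by (intro Ncov_le) auto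
  also have "\<dots> \<le> card V" using V by (intro card_image_le) auto
  finally show ?thesis using V by simp
qed

lemma Ncov_pre:
  assumes "g ` X \<subseteq> X" "V0 \<subseteq> D" "X \<subseteq> \<Union>V0" "finite V0"
    and "\<And>W. W \<in> D \<Longrightarrow> \<exists>C'\<in>C. X \<inter> g -` W \<subseteq> C'"
  shows "Ncov X C \<le> Ncov X D"
proof -
  obtain V where V: "V \<subseteq> D" "X \<subseteq> \<Union>V" "finite V" "card V = Ncov X D"
    using Ncov_min[of D X] assms by blast
  obtain h where h: "\<And>W. W \<in> D \<Longrightarrow> h W \<in> C \<and> X \<inter> g -` W \<subseteq> h W"
    using assms(5) by metis
  have "X \<subseteq> \<Union>(h ` V)"
  proof
    fix x assume x: "x \<in> X"
    then have "g x \<in> X" using assms(1) by auto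
    then obtain W where "W \<in> V" "g x \<in> W" using V by auto
    then show "x \<in> \<Union>(h ` V)" using h[of W] V x by auto
  qed
  then have "Ncov X C \<le> card (h ` V)" using h V by (intro Ncov_le) auto
  also have "\<dots> \<le> card V" using V by (intro card_image_le) auto
  finally show ?thesis using V by simp
qed

lemma Ncov_split:
  assumes "\<And>k. finite (C k) \<and> X \<subseteq> \<Union>(C k)"
  shows "Ncov X (join_covers X C (m + n)) \<le> card (join_covers X C m) * Ncov X (join_covers X (\<lambda>k. C (k + m)) n)"
proof -
  have J1: "finite (join_covers X C m)" "X \<subseteq> \<Union>(join_covers X C m)" using join_fin_cov[of m C X] assms by auto
  have J2: "finite (join_covers X (\<lambda>k. C (k + m)) n)" "X \<subseteq> \<Union>(join_covers X (\<lambda>k. C (k + m)) n)"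
    using join_fin_cov[of n "\<lambda>k. C (k + m)" X] assms by auto
  obtain V where V: "V \<subseteq> join_covers X (\<lambda>k. C (k + m)) n" "X \<subseteq> \<Union>V" "finite V"
     "card V = Ncov X (join_covers X (\<lambda>k. C (k + m)) n)"
    using Ncov_min[of "join_covers X (\<lambda>k. C (k + m)) n" X] J2 by blast
  let ?W = "(\<lambda>(A,B). A \<inter> B) ` (join_covers X C m \<times> V)"
  have sub: "?W \<subseteq> join_covers X C (m + n)" using V join_split by fast
  have cov: "X \<subseteq> \<Union>?W"
  proof
    fix x assume "x \<in> X"
    then obtain A B where "A \<in> join_covers X C m" "x \<in> A" "B \<in> V" "x \<in> B" using J1 V by blast
    then show "x \<in> \<Union>?W" by blast
  qed
  have "Ncov X (join_covers X C (m + n)) \<le> card ?W"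
    using sub cov J1 V by (intro Ncov_le) auto
  also have "\<dots> \<le> card (join_covers X C m \<times> V)" using J1 V by (intro card_image_le) auto
  finally show ?thesis using V by (simp add: card_cartesian_product)
qed


lemma ln_mono_nat: "(a::nat) \<le> b \<Longrightarrow> ln (real a) \<le> ln (real b)"
  by (cases "a = 0"; cases "b = 0") auto

lemma equicont_comp:
  assumes maps: "\<And>n. f n ` X \<subseteq> X"
    and ec: "\<And>\<epsilon>. \<epsilon> > 0 \<Longrightarrow> \<exists>\<delta>>0. \<forall>x\<in>X. \<forall>y\<in>X. dist x y < \<delta> \<longrightarrow> (\<forall>n. dist (f n x) (f n y) < \<epsilon>)"
  shows "\<epsilon> > 0 \<Longrightarrow> \<exists>\<delta>>0. \<forall>x\<in>X. \<forall>y\<in>X. dist x y < \<delta> \<longrightarrow> (\<forall>p. dist (ncomp (\<lambda>n. f (n + p)) m x) (ncomp (\<lambda>n. f (n + p)) m y) < \<epsilon>)"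
proof (induction m arbitrary: \<epsilon>)
  case 0 then show ?case by auto
next
  case (Suc m)
  obtain \<delta>1 where d1: "\<delta>1 > 0" "\<forall>x\<in>X. \<forall>y\<in>X. dist x y < \<delta>1 \<longrightarrow> (\<forall>n. dist (f n x) (f n y) < \<epsilon>)"
    using ec[OF Suc.prems] by blast
  obtain \<delta> where d: "\<delta> > 0" "\<forall>x\<in>X. \<forall>y\<in>X. dist x y < \<delta> \<longrightarrow> (\<forall>p. dist (ncomp (\<lambda>n. f (n + p)) m x) (ncomp (\<lambda>n. f (n + p)) m y) < \<delta>1)"
    using Suc.IH[OF d1(1)] by blast
  have mp: "\<And>p x. x \<in> X \<Longrightarrow> ncomp (\<lambda>n. f (n + p)) m x \<in> X"
    by (rule ncomp_maps[where X=X]) (use maps in auto)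
  have "dist (ncomp (\<lambda>n. f (n + p)) (Suc m) x) (ncomp (\<lambda>n. f (n + p)) (Suc m) y) < \<epsilon>"
    if "x \<in> X" "y \<in> X" "dist x y < \<delta>" for x y p
  proof -
    have "dist (ncomp (\<lambda>n. f (n + p)) m x) (ncomp (\<lambda>n. f (n + p)) m y) < \<delta>1" using d that by blast
    then show ?thesis using d1(2) mp[OF that(1)] mp[OF that(2)] by simp
  qed
  then show ?case using d(1) by blast
qed

lemma lebesgue_cover:
  assumes "compact X" "U \<in> open_covers X"
  obtains e where "e > 0" "\<And>x. x \<in> X \<Longrightarrow> \<exists>u\<in>U. X \<inter> ball x e \<subseteq> u"
proof -
  have "\<forall>u\<in>U. \<exists>T. open T \<and> u = X \<inter> T" using assms(2) unfolding open_covers_def openin_open by blast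
  then obtain T where T: "\<And>u. u \<in> U \<Longrightarrow> open (T u) \<and> u = X \<inter> T u" by metis
  have "X \<subseteq> \<Union>(T ` U)" using assms(2) T unfolding open_covers_def by blast
  then obtain e where e: "0 < e" "\<And>x. x \<in> X \<Longrightarrow> \<exists>G \<in> T ` U. ball x e \<subseteq> G"
    using Heine_Borel_lemma[OF assms(1), of "T ` U"] T by blast
  show ?thesis
  proof (rule that[OF e(1)])
    fix x assume "x \<in> X"
    then obtain u where "u \<in> U" "ball x e \<subseteq> T u" using e by blast
    then show "\<exists>u\<in>U. X \<inter> ball x e \<subseteq> u" using T[of u] by blast
  qed
qed

lemma cover_preimage_fc:
  assumes "h ` X \<subseteq> X" "U \<in> open_covers X"
  shows "finite (cover_preimage X h U) \<and> X \<subseteq> \<Union>(cover_preimage X h U)"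
proof
  show "finite (cover_preimage X h U)" using assms(2) unfolding cover_preimage_def open_covers_def by auto
  show "X \<subseteq> \<Union>(cover_preimage X h U)"
  proof
    fix x assume x: "x \<in> X"
    then have "h x \<in> X" using assms(1) by auto
    then obtain u where "u \<in> U" "h x \<in> u" using assms(2) unfolding open_covers_def by auto
    then show "x \<in> \<Union>(cover_preimage X h U)" using x unfolding cover_preimage_def by auto
  qed
qed


lemma part1:
  fixes X :: "'a::metric_space set" and f :: "nat \<Rightarrow> 'a \<Rightarrow> 'a"
  assumes cX: "compact X"
    and maps: "\<And>n. f n ` X \<subseteq> X" and surj: "\<And>n. f n ` X = X"
    and ec: "\<And>\<epsilon>. \<epsilon> > 0 \<Longrightarrow> \<exists>\<delta>>0. \<forall>x\<in>X. \<forall>y\<in>X. dist x y < \<delta> \<longrightarrow> (\<forall>n. dist (f n x) (f n y) < \<epsilon>)"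
  shows "seq_entropy X (\<lambda>n. f (n + (i + m))) a \<le> seq_entropy X (\<lambda>n. f (n + i)) a"
proof -
  define fi where "fi = (\<lambda>n. f (n + i))"
  define fj where "fj = (\<lambda>n. f (n + (i + m)))"
  define g where "g = ncomp fi m"
  have fjfi: "fj = (\<lambda>n. fi (n + m))" unfolding fi_def fj_def by (auto simp: ac_simps)
  have mapsi: "\<And>k x. x \<in> X \<Longrightarrow> ncomp fi k x \<in> X" by (rule ncomp_maps) (use maps in \<open>auto simp: fi_def\<close>)
  have mapsj: "\<And>k x. x \<in> X \<Longrightarrow> ncomp fj k x \<in> X" by (rule ncomp_maps) (use maps in \<open>auto simp: fj_def\<close>)
  have gX: "g ` X \<subseteq> X" using mapsi g_def by auto
  have gsurj: "X \<subseteq> g ` X" unfolding g_def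
  proof (induction m)
    case 0 then show ?case by auto
  next
    case (Suc m)
    have "X \<subseteq> fi m ` X" using surj[of "m + i"] by (auto simp: fi_def)
    also have "\<dots> \<subseteq> fi m ` (ncomp fi m ` X)" using Suc by blast
    finally show ?case by (simp add: image_comp)
  qed
  show ?thesis unfolding seq_entropy_def fi_def[symmetric] fj_def[symmetric]
  proof (rule SUP_least)
    fix U assume U: "U \<in> open_covers X"
    obtain e where e: "e > 0" "\<And>x. x \<in> X \<Longrightarrow> \<exists>u\<in>U. X \<inter> ball x e \<subseteq> u"
      using lebesgue_cover[OF cX U] by blast
    obtain \<delta> where d: "\<delta> > 0" "\<forall>x\<in>X. \<forall>y\<in>X. dist x y < \<delta> \<longrightarrow> (\<forall>p. dist (ncomp (\<lambda>n. f (n + p)) m x) (ncomp (\<lambda>n. f (n + p)) m y) < e)"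
      using equicont_comp[of f X, OF maps ec e(1)] by blast
    have cov: "X \<subseteq> (\<Union>x\<in>X. ball x \<delta>)" using d(1) by auto
    obtain T where T: "T \<subseteq> X" "finite T" "X \<subseteq> (\<Union>x\<in>T. ball x \<delta>)"
      using compactE_image[OF cX open_ball cov] by blast
    define V where "V = (\<lambda>x. X \<inter> ball x \<delta>) ` T"
    have V: "V \<in> open_covers X" unfolding V_def open_covers_def
    proof (intro CollectI conjI ballI)
      show "finite ((\<lambda>x. X \<inter> ball x \<delta>) ` T)" using T(2) by simp
      show "openin (top_of_set X) U'" if "U' \<in> (\<lambda>x. X \<inter> ball x \<delta>) ` T" for U'
        using that by (auto intro: openin_open_Int)
      show "X \<subseteq> \<Union>((\<lambda>x. X \<inter> ball x \<delta>) ` T)" using T(3) by blast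
    qed
    have key: "Ncov X (join_covers X (\<lambda>k. cover_preimage X (ncomp fj (a k)) U) n)
        \<le> Ncov X (join_covers X (\<lambda>k. cover_preimage X (ncomp fi (a k)) V) n)" for n
    proof -
      let ?D = "join_covers X (\<lambda>k. cover_preimage X (ncomp fi (a k)) V) n"
      have fc: "finite ?D \<and> X \<subseteq> \<Union>?D"
        by (rule join_fin_cov, rule cover_preimage_fc[OF _ V]) (use mapsi in auto)
      have perk: "\<exists>C'\<in>cover_preimage X (ncomp fj (a k)) U. g ` B \<subseteq> C'"
        if B: "B \<in> cover_preimage X (ncomp fi (a k)) V" for k B
      proof -
        obtain x where x: "x \<in> T" "B = X \<inter> ncomp fi (a k) -` (X \<inter> ball x \<delta>)"
          using B unfolding cover_preimage_def V_def by auto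
        define F where "F = ncomp (\<lambda>n. f (n + (a k + i))) m"
        have FX: "F z \<in> X" if "z \<in> X" for z unfolding F_def by (rule ncomp_maps) (use maps that in auto)
        have xX: "x \<in> X" using x T by auto
        obtain u where u: "u \<in> U" "X \<inter> ball (F x) e \<subseteq> u" using e(2)[OF FX[OF xX]] by blast
        have comp1: "ncomp fi (a k + m) = F \<circ> ncomp fi (a k)"
          unfolding F_def ncomp_add fi_def by (simp add: ac_simps)
        have comp2: "ncomp fi (m + a k) = ncomp fj (a k) \<circ> g"
          unfolding g_def ncomp_add fjfi ..
        have "g ` B \<subseteq> X \<inter> ncomp fj (a k) -` u"
        proof
          fix w assume "w \<in> g ` B"
          then obtain y where y: "y \<in> X" "ncomp fi (a k) y \<in> X \<inter> ball x \<delta>" "w = g y"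
            using x by auto
          let ?z = "ncomp fi (a k) y"
          have "dist (F x) (F ?z) < e" using d(2) xX y(2) unfolding F_def by (auto simp: dist_commute)
          then have "F ?z \<in> u" using u FX y(2) by (auto simp: dist_commute)
          moreover have "ncomp fj (a k) w = F ?z"
            using comp1 comp2 y(3) by (metis add.commute comp_apply)
          ultimately show "w \<in> X \<inter> ncomp fj (a k) -` u" using y gX by auto
        qed
        then show ?thesis using u(1) unfolding cover_preimage_def by blast
      qed
      show ?thesis
      proof (rule Ncov_img[OF gsurj _ _ _ ])
        show "?D \<subseteq> ?D" ..
        show "X \<subseteq> \<Union>?D" "finite ?D" using fc by auto
        fix W assume W: "W \<in> ?D"
        have "\<exists>C'\<in>join_covers X (\<lambda>k. cover_preimage X (ncomp fj (a k)) U) n. g ` W \<subseteq> C'"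
        proof (rule join_img[OF gX _ W])
          fix k B assume "B \<in> cover_preimage X (ncomp fi (a k)) V"
          then show "\<exists>C'\<in>cover_preimage X (ncomp fj (a k)) U. g ` B \<subseteq> C'" by (rule perk)
        qed
        then obtain C' where "C' \<in> join_covers X (\<lambda>k. cover_preimage X (ncomp fj (a k)) U) n" "g ` W \<subseteq> C'"
          by blast
        then show "\<exists>C'\<in>join_covers X (\<lambda>k. cover_preimage X (ncomp fj (a k)) U) n. g ` (W \<inter> X) \<subseteq> C'"
          by blast
      qed
    qed
    have "limsup (\<lambda>n. ereal (ln (real (Ncov X (join_covers X (\<lambda>k. cover_preimage X (ncomp fj (a k)) U) n))) / real n))
        \<le> limsup (\<lambda>n. ereal (ln (real (Ncov X (join_covers X (\<lambda>k. cover_preimage X (ncomp fi (a k)) V) n))) / real n))"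
    proof (rule Limsup_mono, rule always_eventually, rule allI)
      fix n
      have "ln (real (Ncov X (join_covers X (\<lambda>k. cover_preimage X (ncomp fj (a k)) U) n))) / real n
         \<le> ln (real (Ncov X (join_covers X (\<lambda>k. cover_preimage X (ncomp fi (a k)) V) n))) / real n"
        by (intro divide_right_mono ln_mono_nat key) simp
      then show "ereal (ln (real (Ncov X (join_covers X (\<lambda>k. cover_preimage X (ncomp fj (a k)) U) n))) / real n)
         \<le> ereal (ln (real (Ncov X (join_covers X (\<lambda>k. cover_preimage X (ncomp fi (a k)) V) n))) / real n)"
        by simp
    qed
    also have "\<dots> \<le> (SUP \<A>\<in>open_covers X.
     limsup (\<lambda>n. ereal (ln (real (Ncov X (join_covers X (\<lambda>k. cover_preimage X (ncomp fi (a k)) \<A>) n))) / real n)))"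
      using V by (rule SUP_upper)
    finally show "limsup (\<lambda>n. ereal (ln (real (Ncov X (join_covers X (\<lambda>k. cover_preimage X (ncomp fj (a k)) U) n))) / real n))
        \<le> (SUP \<A>\<in>open_covers X.
     limsup (\<lambda>n. ereal (ln (real (Ncov X (join_covers X (\<lambda>k. cover_preimage X (ncomp fi (a k)) \<A>) n))) / real n)))" .
  qed
qed


lemma part2:
  fixes X :: "'a::metric_space set" and f :: "nat \<Rightarrow> 'a \<Rightarrow> 'a"
  assumes maps: "\<And>n. f n ` X \<subseteq> X" and ne: "X \<noteq> {}" and sm: "strict_mono a"
  shows "seq_entropy X (\<lambda>n. f (n + i)) a \<le> sup_seq_entropy X (\<lambda>n. f (n + (i + m)))"
proof -
  define fi where "fi = (\<lambda>n. f (n + i))"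
  define fj where "fj = (\<lambda>n. f (n + (i + m)))"
  define g where "g = ncomp fi m"
  define b where "b = (\<lambda>k. a (k + m) - m)"
  have fjfi: "fj = (\<lambda>n. fi (n + m))" unfolding fi_def fj_def by (simp add: ac_simps)
  have mapsi: "\<And>k x. x \<in> X \<Longrightarrow> ncomp fi k x \<in> X" by (rule ncomp_maps) (use maps in \<open>auto simp: fi_def\<close>)
  have mapsj: "\<And>k x. x \<in> X \<Longrightarrow> ncomp fj k x \<in> X" by (rule ncomp_maps) (use maps in \<open>auto simp: fj_def\<close>)
  have gX: "g ` X \<subseteq> X" using mapsi g_def by auto
  have ge: "k + m \<le> a (k + m)" for k using seq_suble[OF sm] by blast
  have ab: "a (k + m) = m + b k" for k using ge[of k] unfolding b_def by simp
  have bsm: "strict_mono b"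
  proof (rule strict_monoI)
    fix x y :: nat assume "x < y"
    then have "a (x + m) < a (y + m)" using sm by (simp add: strict_mono_less)
    then show "b x < b y" using ab[of x] ab[of y] by simp
  qed
  show ?thesis unfolding seq_entropy_def fi_def[symmetric]
  proof (rule SUP_least)
    fix U assume U: "U \<in> open_covers X"
    define P where "P = (\<lambda>k. cover_preimage X (ncomp fi (a k)) U)"
    define Q where "Q = (\<lambda>k. cover_preimage X (ncomp fj (b k)) U)"
    define Na where "Na = (\<lambda>n. Ncov X (join_covers X P n))"
    define Nb where "Nb = (\<lambda>n. Ncov X (join_covers X Q n))"
    define c where "c = card (join_covers X P m)"
    have PF: "\<And>k. finite (P k) \<and> X \<subseteq> \<Union>(P k)" unfolding P_def
      by (rule cover_preimage_fc[OF _ U]) (use mapsi in auto)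
    have QF: "\<And>k. finite (Q k) \<and> X \<subseteq> \<Union>(Q k)" unfolding Q_def
      by (rule cover_preimage_fc[OF _ U]) (use mapsj in auto)
    have JQ: "finite (join_covers X Q n) \<and> X \<subseteq> \<Union>(join_covers X Q n)" for n
      by (rule join_fin_cov) (use QF in auto)
    have JP: "finite (join_covers X P n) \<and> X \<subseteq> \<Union>(join_covers X P n)" for n
      by (rule join_fin_cov) (use PF in auto)
    have Nbpos: "Nb n \<ge> 1" for n unfolding Nb_def
      by (rule Ncov_pos[OF ne]) (use JQ in blast)
    have Napos: "Na n \<ge> 1" for n unfolding Na_def
      by (rule Ncov_pos[OF ne]) (use JP in blast)
    have cpos: "c \<ge> 1"
    proof -
      have "Na m \<le> c" unfolding Na_def c_def by (rule Ncov_le) (use JP in auto)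
      then show ?thesis using Napos[of m] by simp
    qed
    have bound: "Na (m + n) \<le> c * Nb n" for n
    proof -
      have s: "Na (m + n) \<le> c * Ncov X (join_covers X (\<lambda>k. P (k + m)) n)"
        unfolding Na_def c_def by (rule Ncov_split) (use PF in auto)
      have perk: "\<exists>C'\<in>P (k + m). X \<inter> g -` B \<subseteq> C'" if B: "B \<in> Q k" for k B
      proof -
        obtain u where u: "u \<in> U" "B = X \<inter> ncomp fj (b k) -` u"
          using B unfolding Q_def cover_preimage_def by auto
        have comp: "ncomp fi (m + b k) = ncomp fj (b k) \<circ> g"
          unfolding g_def ncomp_add fjfi ..
        have "X \<inter> g -` B \<subseteq> X \<inter> ncomp fi (a (k + m)) -` u"
        proof
          fix x assume x: "x \<in> X \<inter> g -` B"
          then have "ncomp fj (b k) (g x) \<in> u" using u by auto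
          then have "ncomp fi (a (k + m)) x \<in> u" unfolding ab comp by simp
          then show "x \<in> X \<inter> ncomp fi (a (k + m)) -` u" using x by auto
        qed
        moreover have "X \<inter> ncomp fi (a (k + m)) -` u \<in> P (k + m)"
          unfolding P_def cover_preimage_def using u(1) by blast
        ultimately show ?thesis by blast
      qed
      have "Ncov X (join_covers X (\<lambda>k. P (k + m)) n) \<le> Nb n"
        unfolding Nb_def
      proof (rule Ncov_pre[OF gX])
        show "join_covers X Q n \<subseteq> join_covers X Q n" ..
        show "X \<subseteq> \<Union>(join_covers X Q n)" "finite (join_covers X Q n)" using JQ by auto
        fix W assume W: "W \<in> join_covers X Q n"
        show "\<exists>C'\<in>join_covers X (\<lambda>k. P (k + m)) n. X \<inter> g -` W \<subseteq> C'"
        proof (rule join_pre[OF _ W])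
          fix k B assume "B \<in> Q k"
          then show "\<exists>C'\<in>P (k + m). X \<inter> g -` B \<subseteq> C'" by (rule perk)
        qed
      qed
      then show ?thesis using s by (meson dual_order.trans mult_le_mono2)
    qed
    have rineq: "ln (real (Na (n + m))) / real (n + m) \<le> ln (real c) / real (n + m) + ln (real (Nb n)) / real n"
      if n: "n > 0" for n
    proof -
      have "real (Na (n + m)) \<le> real c * real (Nb n)" using bound[of n] by (simp add: add.commute flip: of_nat_mult)
      then have "ln (real (Na (n + m))) \<le> ln (real c * real (Nb n))"
        using Napos[of "n + m"] by (intro ln_mono) auto
      also have "\<dots> = ln (real c) + ln (real (Nb n))"
        using cpos Nbpos[of n] by (simp add: ln_mult)
      finally have 1: "ln (real (Na (n + m))) / real (n + m) \<le> ln (real c) / real (n + m) + ln (real (Nb n)) / real (n + m)"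
        using n by (simp add: add_divide_distrib[symmetric] divide_right_mono)
      have "ln (real (Nb n)) \<ge> 0" using Nbpos[of n] by simp
      then have "ln (real (Nb n)) / real (n + m) \<le> ln (real (Nb n)) / real n"
        using n by (intro divide_left_mono) auto
      then show ?thesis using 1 by linarith
    qed
    define xa where "xa = (\<lambda>n. ereal (ln (real (Na n)) / real n))"
    define yb where "yb = (\<lambda>n. ereal (ln (real (Nb n)) / real n))"
    define z where "z = (\<lambda>n. ereal (ln (real c) / real (n + m)))"
    have z0: "limsup z = 0"
    proof -
      have "(\<lambda>n. ln (real c) / real n) \<longlonglongrightarrow> 0" by (rule lim_const_over_n)
      then have "(\<lambda>n. ln (real c) / real (n + m)) \<longlonglongrightarrow> 0" by (rule LIMSEQ_ignore_initial_segment)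
      then have "z \<longlonglongrightarrow> 0" unfolding z_def zero_ereal_def by simp
      then show ?thesis by (intro lim_imp_Limsup) auto
    qed
    have "limsup xa = limsup (\<lambda>n. xa (n + m))" by (simp add: limsup_shift_k)
    also have "\<dots> \<le> limsup (\<lambda>n. z n + yb n)"
    proof (rule Limsup_mono)
      show "\<forall>\<^sub>F n in sequentially. xa (n + m) \<le> z n + yb n"
        using eventually_gt_at_top[of 0]
        by eventually_elim (use rineq in \<open>simp add: xa_def z_def yb_def\<close>)
    qed
    also have "\<dots> \<le> limsup z + limsup yb" by (rule ereal_limsup_add_mono)
    also have "\<dots> = limsup yb" using z0 by simp
    also have "\<dots> \<le> seq_entropy X fj b" unfolding seq_entropy_def yb_def Nb_def Q_def
      using U by (rule SUP_upper)
    also have "\<dots> \<le> sup_seq_entropy X fj" unfolding sup_seq_entropy_def using bsm by (intro SUP_upper) auto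
    finally show "limsup (\<lambda>n. ereal (ln (real (Ncov X (join_covers X (\<lambda>k. cover_preimage X (ncomp fi (a k)) U) n))) / real n))
        \<le> sup_seq_entropy X (\<lambda>n. f (n + (i + m)))"
      unfolding xa_def Na_def P_def fj_def .
  qed
qed


lemma empty_entropy: "seq_entropy {} g a = 0"
proof -
  have "open_covers ({}::'a::metric_space set) \<noteq> {}" unfolding open_covers_def by (auto intro!: exI[of _ "{}"])
  have l: "limsup (\<lambda>n::nat. ereal (ln (real (0::nat)) / real n)) = 0"
    by (simp add: Limsup_const zero_ereal_def[symmetric])
  show ?thesis unfolding seq_entropy_def Ncov_empty l using \<open>open_covers {} \<noteq> {}\<close> by simp
qed

lemma empty_sup_entropy: "sup_seq_entropy ({}::'a::metric_space set) g = 0"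
proof -
  have "{a::nat\<Rightarrow>nat. strict_mono a} \<noteq> {}" using strict_mono_id by blast
  then show ?thesis unfolding sup_seq_entropy_def empty_entropy by simp
qed

theorem proposition4p6:
  fixes X :: "'a::metric_space set" and f :: "nat \<Rightarrow> 'a \<Rightarrow> 'a"
  assumes "compact X"
    and "\<And>n. continuous_on X (f n)"
    and "\<And>n. f n ` X = X"
    and "\<And>\<epsilon>. \<epsilon> > 0 \<Longrightarrow> \<exists>\<delta>>0. \<forall>x\<in>X. \<forall>y\<in>X. dist x y < \<delta> \<longrightarrow> (\<forall>n. dist (f n x) (f n y) < \<epsilon>)"
  shows "(\<forall>a i j. strict_mono a \<and> i \<le> j \<longrightarrow>
            seq_entropy X (\<lambda>n. f (n + i)) a \<ge> seq_entropy X (\<lambda>n. f (n + j)) a)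
       \<and> (\<forall>i j. i \<le> j \<longrightarrow>
            sup_seq_entropy X (\<lambda>n. f (n + i)) = sup_seq_entropy X (\<lambda>n. f (n + j)))"
proof -
  have maps: "\<And>n. f n ` X \<subseteq> X" by (simp add: assms(3))
  have p1: "seq_entropy X (\<lambda>n. f (n + j)) a \<le> seq_entropy X (\<lambda>n. f (n + i)) a" if ij: "i \<le> j" for a i j
  proof -
    obtain m where m: "j = i + m" using le_Suc_ex[OF ij] by (elim exE)
    show ?thesis unfolding m by (rule part1[where X=X and f=f and i=i and m=m and a=a, OF assms(1) maps assms(3) assms(4)])
  qed
  have p2: "sup_seq_entropy X (\<lambda>n. f (n + i)) = sup_seq_entropy X (\<lambda>n. f (n + j))" if ij: "i \<le> j" for i j
  proof (rule antisym)
    obtain m where m: "j = i + m" using le_Suc_ex[OF ij] by (elim exE)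
    show "sup_seq_entropy X (\<lambda>n. f (n + i)) \<le> sup_seq_entropy X (\<lambda>n. f (n + j))"
    proof (cases "X = {}")
      case True then show ?thesis by (simp only: empty_sup_entropy)
    next
      case False
      show ?thesis unfolding sup_seq_entropy_def[of X "\<lambda>n. f (n + i)"]
      proof (rule SUP_least)
        fix a :: "nat \<Rightarrow> nat" assume "a \<in> {a. strict_mono a}"
        then have "strict_mono a" by simp
        then show "seq_entropy X (\<lambda>n. f (n + i)) a \<le> sup_seq_entropy X (\<lambda>n. f (n + j))"
          unfolding m by (rule part2[where X=X and f=f and i=i and m=m and a=a, OF maps False])
      qed
    qed
    show "sup_seq_entropy X (\<lambda>n. f (n + j)) \<le> sup_seq_entropy X (\<lambda>n. f (n + i))"
      unfolding sup_seq_entropy_def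
    proof (rule SUP_mono)
      fix a :: "nat \<Rightarrow> nat" assume "a \<in> {a. strict_mono a}"
      then show "\<exists>a'\<in>{a. strict_mono a}. seq_entropy X (\<lambda>n. f (n + j)) a \<le> seq_entropy X (\<lambda>n. f (n + i)) a'"
        using p1[OF ij, of a] by blast
    qed
  qed
  show ?thesis
  proof (intro conjI allI impI)
    fix a :: "nat \<Rightarrow> nat" and i j :: nat assume "strict_mono a \<and> i \<le> j"
    then show "seq_entropy X (\<lambda>n. f (n + j)) a \<le> seq_entropy X (\<lambda>n. f (n + i)) a" using p1 by blast
  next
    fix i j :: nat assume "i \<le> j"
    then show "sup_seq_entropy X (\<lambda>n. f (n + i)) = sup_seq_entropy X (\<lambda>n. f (n + j))" by (rule p2)
  qed
qed

end
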